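(* Suppose there exists a subspace $\mathcal C\subseteq V$ of dimension $K$ with orthogonal projector $P$ that detects every error in $\mathcal E_\xi$ for each $\xi$ in a prescribed set $\mathcal S$ of sector labels. Then there exist real numbers $\{A_\xi\}_\xi,\{B_\xi\}_\xi$ (indexed by all sectors) satisfying $A_\xi\ge0$ for all $\xi$; $A_\xi\le K B_\xi$ for all $\xi$; $\sum_\xi A_\xi=K$; $\sum_\xi B_\xi=K^2$; $B_\xi=\sum_\rho M_{\xi\rho}A_\rho$ for all $\xi$; and $A_\xi=KB_\xi$ for all $\xi\in\mathcal S$. Namely one may take $A_\xi=A_\xi(P,P)$, $B_\xi=B_\xi(P,P)$. In particular, if this linear system has no solution, no $K$-dimensional subspace of $V$ detects all errors in the sectors $\mathcal E_\xi$, $\xi\in\mathcal S$.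
   Context: Let $G$ be a group and $V$ a finite-dimensional complex Hilbert space carrying a unitary representation $\rho$ of $G$; $G$ acts on $\mathcal L(V)$ by conjugation $g\cdot X=\rho(g)X\rho(g)^\dagger$, unitary for the Hilbert–Schmidt inner product $\langle X_1,X_2\rangle=\mathrm{Tr}(X_1^\dagger X_2)$. Assume multiplicity-freeness: $\mathcal L(V)=\bigoplus_\xi\mathcal E_\xi$, a finite orthogonal direct sum of nonzero, pairwise non-isomorphic irreducible $G$-subrepresentations; $d_\xi=\dim\mathcal E_\xi$. Let $\Pi_\xi$ be the orthogonal projector onto $\mathcal E_\xi$, $\mathcal B_\xi$ an orthonormal basis of $\mathcal E_\xi$, $\mathrm{Twirl}_\xi(X)=\sum_{E\in\mathcal B_\xi}E^\dagger XE$, $A_\xi(X_1,X_2)=\langle X_1,\Pi_\xi(X_2)\rangle$, $B_\xi(X_1,X_2)=\langle X_1,\mathrm{Twirl}_\xi(X_2)\rangle$. With $\langle\!\langle\mathcal S,\mathcal T\rangle\!\rangle=\mathrm{Tr}(\mathcal S^\dagger\mathcal T)$ on superoperators, the unnormalized MacWilliams matrix is $M_{\xi\rho}=\frac{1}{d_\rho}\langle\!\langle\Pi_\rho,\mathrm{Twirl}_\xi\rangle\!\rangle$ (equivalently $\sqrt{d_\xi/d_\rho}\,U_{\xi\rho}$ with $U_{\xi\rho}=\langle\!\langle d_\rho^{-1/2}\Pi_\rho,d_\xi^{-1/2}\mathrm{Twirl}_\xi\rangle\!\rangle$). A subspace $\mathcal C\subseteq V$ with orthogonal projector $P$ detects every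 error in $\mathcal F\subseteq\mathcal L(V)$ if for every $E\in\mathcal F$ there is $c_E\in\mathbb C$ with $PEP=c_EP$. *)

theory Defs
  imports "HOL-Analysis.Analysis" "HOL-Algebra.Group"
begin

text \<open>Operators on V = complex^'n are matrices complex^'n^'n.\<close>

definition adjm :: "complex^'n^'n \<Rightarrow> complex^'n^'n" where
  "adjm X = (\<chi> i j. cnj (X $ j $ i))"

definition hs :: "complex^'n^'n \<Rightarrow> complex^'n^'n \<Rightarrow> complex" where
  "hs X Y = trace (adjm X ** Y)"

definition msc :: "complex \<Rightarrow> complex^'n^'n \<Rightarrow> complex^'n^'n" where
  "msc c X = (\<chi> i j. c * X $ i $ j)"

definition vinner :: "complex^'n \<Rightarrow> complex^'n \<Rightarrow> complex" where
  "vinner x y = (\<Sum>i\<in>UNIV. cnj (x $ i) * y $ i)"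

definition unitary_mat :: "complex^'n^'n \<Rightarrow> bool" where
  "unitary_mat U \<longleftrightarrow> adjm U ** U = mat 1 \<and> U ** adjm U = mat 1"

definition unitary_rep :: "('g, 'b) monoid_scheme \<Rightarrow> ('g \<Rightarrow> complex^'n^'n) \<Rightarrow> bool" where
  "unitary_rep G \<rho> \<longleftrightarrow> group G \<and>
     (\<forall>g\<in>carrier G. unitary_mat (\<rho> g)) \<and>
     (\<forall>g\<in>carrier G. \<forall>h\<in>carrier G. \<rho> (g \<otimes>\<^bsub>G\<^esub> h) = \<rho> g ** \<rho> h)"

definition conj_act :: "('g \<Rightarrow> complex^'n^'n) \<Rightarrow> 'g \<Rightarrow> complex^'n^'n \<Rightarrow> complex^'n^'n" where
  "conj_act \<rho> g X = \<rho> g ** X ** adjm (\<rho> g)"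

definition csubspace :: "(complex^'n^'n) set \<Rightarrow> bool" where
  "csubspace E \<longleftrightarrow> 0 \<in> E \<and> (\<forall>X\<in>E. \<forall>Y\<in>E. X + Y \<in> E) \<and> (\<forall>c. \<forall>X\<in>E. msc c X \<in> E)"

definition cspan :: "(complex^'n^'n) set \<Rightarrow> (complex^'n^'n) set" where
  "cspan S = {X. \<exists>F c. finite F \<and> F \<subseteq> S \<and> X = (\<Sum>E\<in>F. msc (c E) E)}"

definition invariant :: "('g, 'b) monoid_scheme \<Rightarrow> ('g \<Rightarrow> complex^'n^'n) \<Rightarrow> (complex^'n^'n) set \<Rightarrow> bool" where
  "invariant G \<rho> W \<longleftrightarrow> (\<forall>g\<in>carrier G. \<forall>X\<in>W. conj_act \<rho> g X \<in> W)"

definition irreducible_subrep :: "('g, 'b) monoid_scheme \<Rightarrow> ('g \<Rightarrow> complex^'n^'n) \<Rightarrow> (complex^'n^'n) set \<Rightarrow> bool" where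
  "irreducible_subrep G \<rho> E \<longleftrightarrow> csubspace E \<and> E \<noteq> {0} \<and> invariant G \<rho> E \<and>
     (\<forall>W. csubspace W \<and> W \<subseteq> E \<and> invariant G \<rho> W \<longrightarrow> W = {0} \<or> W = E)"

definition isomorphic_subreps :: "('g, 'b) monoid_scheme \<Rightarrow> ('g \<Rightarrow> complex^'n^'n) \<Rightarrow>
    (complex^'n^'n) set \<Rightarrow> (complex^'n^'n) set \<Rightarrow> bool" where
  "isomorphic_subreps G \<rho> E F \<longleftrightarrow> (\<exists>T. bij_betw T E F \<and>
     (\<forall>X\<in>E. \<forall>Y\<in>E. T (X + Y) = T X + T Y) \<and>
     (\<forall>c. \<forall>X\<in>E. T (msc c X) = msc c (T X)) \<and>
     (\<forall>g\<in>carrier G. \<forall>X\<in>E. T (conj_act \<rho> g X) = conj_act \<rho> g (T X)))"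

definition multiplicity_free_decomp :: "('g, 'b) monoid_scheme \<Rightarrow> ('g \<Rightarrow> complex^'n^'n) \<Rightarrow>
    ('x::finite \<Rightarrow> (complex^'n^'n) set) \<Rightarrow> bool" where
  "multiplicity_free_decomp G \<rho> Esp \<longleftrightarrow>
     (\<forall>\<xi>. irreducible_subrep G \<rho> (Esp \<xi>)) \<and>
     (\<forall>\<xi> \<eta>. \<xi> \<noteq> \<eta> \<longrightarrow> (\<forall>X\<in>Esp \<xi>. \<forall>Y\<in>Esp \<eta>. hs X Y = 0)) \<and>
     (\<forall>\<xi> \<eta>. \<xi> \<noteq> \<eta> \<longrightarrow> \<not> isomorphic_subreps G \<rho> (Esp \<xi>) (Esp \<eta>)) \<and>
     (\<forall>X. \<exists>f. (\<forall>\<xi>. f \<xi> \<in> Esp \<xi>) \<and> X = (\<Sum>\<xi>\<in>UNIV. f \<xi>))"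

definition orthonormal_basis_of :: "(complex^'n^'n) set \<Rightarrow> (complex^'n^'n) set \<Rightarrow> bool" where
  "orthonormal_basis_of B E \<longleftrightarrow> finite B \<and> B \<subseteq> E \<and>
     (\<forall>X\<in>B. \<forall>Y\<in>B. hs X Y = (if X = Y then 1 else 0)) \<and> E \<subseteq> cspan B"

definition Proj :: "(complex^'n^'n) set \<Rightarrow> complex^'n^'n \<Rightarrow> complex^'n^'n" where
  "Proj B X = (\<Sum>E\<in>B. msc (hs E X) E)"

definition Twirl :: "(complex^'n^'n) set \<Rightarrow> complex^'n^'n \<Rightarrow> complex^'n^'n" where
  "Twirl B X = (\<Sum>E\<in>B. adjm E ** X ** E)"

definition munit :: "'n \<Rightarrow> 'n \<Rightarrow> complex^'n^'n" where
  "munit i j = (\<chi> k l. if k = i \<and> l = j then 1 else 0)"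

text \<open>Superoperator inner product Tr(S^dagger T), computed in the orthonormal basis of matrix units.\<close>
definition sop_inner :: "(complex^'n^'n \<Rightarrow> complex^'n^'n) \<Rightarrow> (complex^'n^'n \<Rightarrow> complex^'n^'n) \<Rightarrow> complex" where
  "sop_inner S T = (\<Sum>i\<in>UNIV. \<Sum>j\<in>UNIV. hs (S (munit i j)) (T (munit i j)))"

definition MacW :: "('x \<Rightarrow> (complex^'n^'n) set) \<Rightarrow> 'x \<Rightarrow> 'x \<Rightarrow> complex" where
  "MacW B \<xi> \<rho> = sop_inner (Proj (B \<rho>)) (Twirl (B \<xi>)) / of_nat (card (B \<rho>))"

definition orth_projector :: "(complex^'n) set \<Rightarrow> complex^'n^'n \<Rightarrow> bool" where
  "orth_projector C P \<longleftrightarrow> (\<forall>v. P *v v \<in> C \<and> (\<forall>w\<in>C. vinner w (v - P *v v) = 0))"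

definition detects :: "complex^'n^'n \<Rightarrow> (complex^'n^'n) set \<Rightarrow> bool" where
  "detects P F \<longleftrightarrow> (\<forall>E\<in>F. \<exists>c. P ** E ** P = msc c P)"

end

theory Submission
  imports Defs "Jordan_Normal_Form.Char_Poly"
begin

lemma eig_exists:
  fixes M :: "nat \<Rightarrow> nat \<Rightarrow> complex"
  assumes d: "0 < d"
  shows "\<exists>lam v. (\<exists>i<d. v i \<noteq> 0) \<and> (\<forall>i<d. (\<Sum>j<d. M i j * v j) = lam * v i)"
proof -
  define A where "A = Matrix.mat d d (\<lambda>(i,j). M i j)"
  have A: "A \<in> carrier_mat d d" unfolding A_def by simp
  have "degree (char_poly A) = d" using degree_monic_char_poly[OF A] by simp
  then have "\<not> constant (poly (char_poly A))" using d constant_degree[of "char_poly A"] by simp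
  then obtain k where "poly (char_poly A) k = 0" using fundamental_theorem_of_algebra by blast
  then have "eigenvalue A k" using eigenvalue_root_char_poly[OF A] by simp
  then obtain v where v: "v \<in> carrier_vec d" "v \<noteq> 0\<^sub>v d" "A *\<^sub>v v = k \<cdot>\<^sub>v v"
    unfolding eigenvalue_def eigenvector_def using A by auto
  have "\<exists>i<d. v $ i \<noteq> 0"
  proof (rule ccontr)
    assume "\<not> ?thesis"
    then have "v = 0\<^sub>v d" using v(1) by (auto intro!: eq_vecI)
    with v(2) show False by simp
  qed
  moreover have "\<forall>i<d. (\<Sum>j<d. M i j * v $ j) = k * v $ i"
  proof (intro allI impI)
    fix i assume i: "i < d"
    have "(A *\<^sub>v v) $ i = (k \<cdot>\<^sub>v v) $ i" using v(3) by simp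
    then show "(\<Sum>j<d. M i j * v $ j) = k * v $ i"
      using i v(1) A by (simp add: A_def scalar_prod_def row_def lessThan_atLeast0)
  qed
  ultimately show ?thesis by blast
qed


lemmas cvec_eq = Finite_Cartesian_Product.vec_eq_iff

abbreviation "Imat \<equiv> (Finite_Cartesian_Product.mat 1 :: complex^'n^'n)"

lemma mm_nth: "((A::complex^'n^'n) ** B) $ i $ j = (\<Sum>k\<in>UNIV. A$i$k * B$k$j)"
  by (simp add: matrix_matrix_mult_def)
lemma msc_nth[simp]: "msc c X $ i $ j = c * X$i$j"
  by (simp add: msc_def)
lemma adjm_nth[simp]: "adjm X $ i $ j = cnj (X$j$i)"
  by (simp add: adjm_def)
lemma Imat_nth: "Imat $ i $ j = (if i = j then 1 else 0)"
  by (simp add: Finite_Cartesian_Product.mat_def)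
lemma munit_nth: "munit i j $ k $ l = (if k = i \<and> l = j then 1 else 0)"
  by (simp add: munit_def)

lemma hs_expand: "hs X Y = (\<Sum>i\<in>UNIV. \<Sum>k\<in>UNIV. cnj (X$k$i) * Y$k$i)"
  by (simp add: hs_def trace_def mm_nth)

lemma adjm_adjm[simp]: "adjm (adjm X) = X" by (simp add: cvec_eq)
lemma adjm_mult: "adjm ((A::complex^'n^'n) ** B) = adjm B ** adjm A"
  by (simp add: cvec_eq mm_nth mult.commute)
lemma adjm_msc: "adjm (msc c X) = msc (cnj c) (adjm X)" by (simp add: cvec_eq)
lemma adjm_add: "adjm (X + Y) = adjm X + adjm Y" by (simp add: cvec_eq)
lemma adjm_Imat: "adjm Imat = Imat" by (simp add: cvec_eq Imat_nth)

lemma msc_add: "msc c (X + Y) = msc c X + msc c Y" by (simp add: cvec_eq algebra_simps)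
lemma msc_msc: "msc c (msc d X) = msc (c*d) X" by (simp add: cvec_eq)
lemma msc_0[simp]: "msc 0 X = 0" "msc c 0 = 0" by (simp_all add: cvec_eq)
lemma msc_1[simp]: "msc 1 X = X" by (simp add: cvec_eq)
lemma msc_sum: "msc c (sum f F) = sum (\<lambda>x. msc c (f x)) F"
  by (simp add: cvec_eq sum_distrib_left)
lemma msc_sum_left: "msc (sum f F) X = sum (\<lambda>x. msc (f x) X) F"
  by (simp add: cvec_eq sum_distrib_right)
lemma msc_mult_left: "msc c (A ** B) = (msc c A) ** B" by (simp add: cvec_eq mm_nth sum_distrib_left mult.assoc)
lemma msc_mult_right: "msc c (A ** B) = A ** (msc c B)" by (simp add: cvec_eq mm_nth sum_distrib_left algebra_simps)
lemma msc_uminus: "msc (-1) X = - X" by (simp add: cvec_eq)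
lemma matrix_add_rdistrib: "((B::complex^'n^'n) + C) ** A = (B ** A) + (C ** A)"
  by (simp add: cvec_eq mm_nth sum.distrib algebra_simps)
lemma mult_sum_left: "(sum f F :: complex^'n^'n) ** A = sum (\<lambda>x. f x ** A) F"
  by (induct F rule: infinite_finite_induct) (auto simp: matrix_add_rdistrib)
lemma mult_sum_right: "A ** (sum f F :: complex^'n^'n) = sum (\<lambda>x. A ** f x) F"
  by (induct F rule: infinite_finite_induct) (auto simp: matrix_add_ldistrib)

lemma hs_add2: "hs X (Y + Z) = hs X Y + hs X Z"
  by (simp add: hs_expand algebra_simps sum.distrib)
lemma hs_add1: "hs (X + Y) Z = hs X Z + hs Y Z"
  by (simp add: hs_expand algebra_simps sum.distrib)
lemma hs_msc2: "hs X (msc c Y) = c * hs X Y"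
  by (simp add: hs_expand sum_distrib_left algebra_simps)
lemma hs_msc1: "hs (msc c X) Y = cnj c * hs X Y"
  by (simp add: hs_expand sum_distrib_left algebra_simps)
lemma hs_zero[simp]: "hs X 0 = 0" "hs 0 X = 0"
  by (simp_all add: hs_expand)
lemma hs_sum2: "hs X (sum f F) = (\<Sum>x\<in>F. hs X (f x))"
  by (induct F rule: infinite_finite_induct) (auto simp: hs_add2)
lemma hs_sum1: "hs (sum f F) X = (\<Sum>x\<in>F. hs (f x) X)"
  by (induct F rule: infinite_finite_induct) (auto simp: hs_add1)
lemma hs_cnj: "cnj (hs X Y) = hs Y X"
  by (simp add: hs_expand mult.commute)
lemma hs_uminus2: "hs X (- Y) = - hs X Y"
  by (simp add: hs_expand sum_negf)
lemma hs_diff2: "hs X (Y - Z) = hs X Y - hs X Z"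
  by (simp add: hs_expand algebra_simps sum_subtractf)

definition hsn :: "complex^'n^'n \<Rightarrow> real" where
  "hsn X = (\<Sum>i\<in>UNIV. \<Sum>k\<in>UNIV. (cmod (X$k$i))^2)"

lemma hs_self: "hs X X = complex_of_real (hsn X)"
proof -
  have "\<And>z. cnj z * z = complex_of_real ((cmod z)^2)"
    by (metis complex_norm_square mult.commute complex_mult_cnj of_real_power)
  then show ?thesis by (simp add: hs_expand hsn_def)
qed
lemma hsn_nonneg: "hsn X \<ge> 0" by (simp add: hsn_def sum_nonneg)
lemma hsn_zero: "hsn X = 0 \<Longrightarrow> X = 0"
proof -
  assume h: "hsn X = 0"
  have "\<forall>i\<in>UNIV. (\<Sum>k\<in>UNIV. (cmod (X$k$i))^2) = 0"
    using h unfolding hsn_def by (subst sum_nonneg_eq_0_iff[symmetric]) (auto intro: sum_nonneg)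
  then have "\<forall>i k. (cmod (X$k$i))^2 = 0"
    by (subst (asm) sum_nonneg_eq_0_iff) auto
  then show ?thesis by (simp add: cvec_eq)
qed
lemma hs_self_zero: "hs X X = 0 \<Longrightarrow> X = 0"
  using hsn_zero hs_self by (metis of_real_eq_0_iff)

lemma hs_trace: "hs X Y = trace (adjm X ** Y)" by (simp add: hs_def)


lemma csub_sum:
  assumes E: "csubspace E" and F: "finite F" and f: "\<forall>x\<in>F. f x \<in> E"
  shows "sum f F \<in> E"
  using F f
proof (induct F rule: finite_induct)
  case empty then show ?case using E by (simp add: csubspace_def)
next
  case (insert x F) then show ?case using E unfolding csubspace_def by simp
qed

lemma cspan_sub:
  assumes E: "csubspace E" and B: "B \<subseteq> E" shows "cspan B \<subseteq> E"
proof
  fix X assume "X \<in> cspan B"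
  then obtain F c where F: "finite F" "F \<subseteq> B" "X = (\<Sum>E\<in>F. msc (c E) E)"
    unfolding cspan_def by blast
  have "\<forall>x\<in>F. msc (c x) x \<in> E" using F(2) B E unfolding csubspace_def by blast
  then show "X \<in> E" using csub_sum[OF E F(1)] F(3) by simp
qed

lemma Proj_in_cspan: "finite B \<Longrightarrow> Proj B X \<in> cspan B"
  unfolding cspan_def Proj_def by (rule CollectI, rule exI[of _ B], rule exI[of _ "\<lambda>E. hs E X"]) simp

definition orthonormal :: "(complex^'n^'n) set \<Rightarrow> bool" where
  "orthonormal B \<longleftrightarrow> (\<forall>X\<in>B. \<forall>Y\<in>B. hs X Y = (if X = Y then 1 else 0))"

lemma Proj_cspan:
  assumes fin: "finite B" and on: "orthonormal B" and Y: "Y \<in> cspan B"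
  shows "Proj B Y = Y"
proof -
  from Y obtain F c where F: "finite F" "F \<subseteq> B" "Y = (\<Sum>E\<in>F. msc (c E) E)"
    unfolding cspan_def by blast
  have h: "hs E Y = (if E \<in> F then c E else 0)" if "E \<in> B" for E
  proof -
    have "hs E Y = (\<Sum>E'\<in>F. c E' * hs E E')" by (simp add: F(3) hs_sum2 hs_msc2)
    also have "\<dots> = (\<Sum>E'\<in>F. if E' = E then c E else 0)"
      using on that F(2) unfolding orthonormal_def by (intro sum.cong) auto
    also have "\<dots> = (if E \<in> F then c E else 0)" using F(1) by (simp add: sum.delta')
    finally show ?thesis .
  qed
  have "Proj B Y = (\<Sum>E\<in>B. msc (if E \<in> F then c E else 0) E)"
    unfolding Proj_def using h by (intro sum.cong) auto
  also have "\<dots> = (\<Sum>E\<in>B. if E \<in> F then msc (c E) E else 0)"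
    by (intro sum.cong) auto
  also have "\<dots> = (\<Sum>E\<in>F. msc (c E) E)"
    using F fin by (simp add: sum.If_cases Int_absorb1)
  finally show ?thesis using F(3) by simp
qed

lemma Proj_add: "Proj B (X + Y) = Proj B X + Proj B Y"
  unfolding Proj_def hs_add2 by (simp add: msc_def sum.distrib cvec_eq distrib_right)
lemma Proj_msc: "Proj B (msc c X) = msc c (Proj B X)"
  by (simp add: Proj_def hs_msc2 msc_sum msc_msc)
lemma Proj_zero[simp]: "Proj B 0 = 0"
  by (simp add: Proj_def)
lemma Proj_sum: "Proj B (sum f F) = (\<Sum>x\<in>F. Proj B (f x))"
  by (induct F rule: infinite_finite_induct) (auto simp: Proj_add)
lemma Proj_orth: "(\<forall>E\<in>B. hs E Y = 0) \<Longrightarrow> Proj B Y = 0"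
  by (simp add: Proj_def)

lemma cnj_mult_self: "z * cnj z = complex_of_real ((cmod z)^2)"
  by (metis complex_norm_square of_real_power)

lemma hs_Proj_self: "hs X (Proj B X) = complex_of_real (\<Sum>E\<in>B. (cmod (hs E X))^2)"
proof -
  have "hs X (Proj B X) = (\<Sum>E\<in>B. hs E X * cnj (hs E X))"
    by (simp add: Proj_def hs_sum2 hs_msc2 hs_cnj)
  then show ?thesis by (simp add: cnj_mult_self)
qed

lemma hs_pairs: "hs X Y = (\<Sum>p\<in>UNIV. cnj (X$snd p$fst p) * Y$snd p$fst p)"
  unfolding hs_expand by (simp add: sum.cartesian_product UNIV_Times_UNIV[symmetric] case_prod_beta del: UNIV_Times_UNIV)
lemma hsn_pairs: "hsn X = (\<Sum>p\<in>UNIV. (cmod (X$snd p$fst p))^2)"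
  unfolding hsn_def by (simp add: sum.cartesian_product UNIV_Times_UNIV[symmetric] case_prod_beta del: UNIV_Times_UNIV)

lemma hs_CS: "(cmod (hs X Y))^2 \<le> hsn X * hsn Y"
proof -
  have "cmod (hs X Y) \<le> (\<Sum>p\<in>UNIV. cmod (X$snd p$fst p) * cmod (Y$snd p$fst p))"
    unfolding hs_pairs by (rule order.trans[OF norm_sum]) (simp add: norm_mult)
  then have "(cmod (hs X Y))^2 \<le> (\<Sum>p\<in>UNIV. cmod (X$snd p$fst p) * cmod (Y$snd p$fst p))^2"
    by (simp add: power_mono)
  also have "\<dots> \<le> hsn X * hsn Y"
    unfolding hsn_pairs by (rule Cauchy_Schwarz_ineq_sum)
  finally show ?thesis .
qed


lemma vinner_add2: "vinner x (y + z) = vinner x y + vinner x z"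
  by (simp add: vinner_def algebra_simps sum.distrib)
lemma vinner_diff2: "vinner x (y - z) = vinner x y - vinner x z"
  by (simp add: vinner_def algebra_simps sum_subtractf)
lemma vinner_cnj: "cnj (vinner x y) = vinner y x"
  by (simp add: vinner_def mult.commute)
lemma vinner_self_zero: "vinner x x = 0 \<Longrightarrow> x = 0"
proof -
  assume h: "vinner x x = 0"
  have "vinner x x = (\<Sum>i\<in>UNIV. complex_of_real ((cmod (x$i))^2))"
    unfolding vinner_def using cnj_mult_self by (metis (no_types, lifting) mult.commute sum.cong)
  also have "\<dots> = complex_of_real (\<Sum>i\<in>UNIV. (cmod (x$i))^2)" by simp
  finally have "vinner x x = complex_of_real (\<Sum>i\<in>UNIV. (cmod (x$i))^2)" .
  then have "(\<Sum>i\<in>UNIV. (cmod (x$i))^2) = 0" using h by (metis of_real_eq_0_iff)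
  then have "\<forall>i. (cmod (x$i))^2 = 0" by (subst (asm) sum_nonneg_eq_0_iff) auto
  then show "x = 0" by (simp add: cvec_eq)
qed
lemma mv_axis: "((A::complex^'n^'n) *v axis j 1) $ i = A $ i $ j"
  by (simp add: matrix_vector_mult_def axis_def if_distrib cong: if_cong)
lemma vinner_axis: "vinner (axis i 1) y = y $ i"
proof -
  have "vinner (axis i 1) y = (\<Sum>k\<in>UNIV. if k = i then y $ k else 0)"
    unfolding vinner_def axis_def by (intro sum.cong) auto
  then show ?thesis by simp
qed
lemma vinner_axis2: "vinner y (axis i 1) = cnj (y $ i)"
proof -
  have "vinner y (axis i 1) = (\<Sum>k\<in>UNIV. if k = i then cnj (y $ k) else 0)"
    unfolding vinner_def axis_def by (intro sum.cong) auto
  then show ?thesis by simp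
qed

context
  fixes C :: "(complex^'n) set" and P :: "complex^'n^'n"
  assumes C_sub: "vec.subspace C" and P_proj: "orth_projector C P"
begin

lemma P_in: "P *v v \<in> C" using P_proj unfolding orth_projector_def by blast
lemma P_orth: "w \<in> C \<Longrightarrow> vinner w (v - P *v v) = 0" using P_proj unfolding orth_projector_def by blast

lemma P_fix: assumes w: "w \<in> C" shows "P *v w = w"
proof -
  have d: "w - P *v w \<in> C" using vec.subspace_diff[OF C_sub w P_in] .
  have "vinner (w - P *v w) (w - P *v w) = 0" using P_orth[OF d] .
  then have "w - P *v w = 0" by (rule vinner_self_zero)
  then show ?thesis by simp
qed

lemma P_sa: "vinner u (P *v v) = vinner (P *v u) v"
proof -
  have b: "vinner (P *v x) y = vinner (P *v x) (P *v y)" for x y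
    using P_orth[OF P_in, of x y] by (simp add: vinner_diff2)
  have "vinner u (P *v v) = cnj (vinner (P *v v) u)" by (simp add: vinner_cnj)
  also have "\<dots> = cnj (vinner (P *v v) (P *v u))" using b[of v u] by simp
  also have "\<dots> = vinner (P *v u) (P *v v)" by (simp add: vinner_cnj)
  also have "\<dots> = vinner (P *v u) v" using b[of u v] by simp
  finally show ?thesis .
qed

lemma P_adj: "adjm P = P"
proof -
  have "P $ i $ j = cnj (P $ j $ i)" for i j
    using P_sa[of "axis i 1" "axis j 1"] by (simp add: vinner_axis vinner_axis2 mv_axis)
  then have "adjm P $ i $ j = P $ i $ j" for i j :: 'n by (metis adjm_nth)
  then show ?thesis by (simp add: cvec_eq)
qed

lemma P_idem: "P ** P = P"
proof -
  have "(P ** P) *v axis j 1 = P *v axis j 1" for j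
    using P_fix[OF P_in] by (simp add: matrix_vector_mul_assoc[symmetric])
  then have "(P ** P) $ i $ j = P $ i $ j" for i j :: 'n by (metis mv_axis)
  then show ?thesis by (simp add: cvec_eq)
qed

lemma P_trace: "trace P = of_nat (vec.dim C)"
proof -
  obtain Bs where Bs: "Bs \<subseteq> C" "vec.independent Bs" "C \<subseteq> vec.span Bs" "card Bs = vec.dim C"
    using vec.basis_exists by blast
  have fin: "finite Bs" using vec.independent_bound_general[OF Bs(2)] by blast
  define R where "R v = vec.representation Bs (P *v v)" for v
  have Pv: "P *v v \<in> vec.span Bs" for v using P_in Bs(3) by blast
  have rep: "P *v v = (\<Sum>b\<in>Bs. R v b *s b)" for v
    unfolding R_def by (rule vec.sum_representation_eq[symmetric, OF Bs(2) Pv fin order.refl])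
  have "trace P = (\<Sum>i\<in>UNIV. (P *v axis i 1) $ i)" by (simp add: trace_def mv_axis)
  also have "\<dots> = (\<Sum>i\<in>UNIV. \<Sum>b\<in>Bs. R (axis i 1) b * b $ i)"
    by (subst rep) (simp add: sum_component)
  also have "\<dots> = (\<Sum>b\<in>Bs. \<Sum>i\<in>UNIV. b $ i * R (axis i 1) b)"
    by (subst sum.swap) (simp add: mult.commute)
  also have "\<dots> = (\<Sum>b\<in>Bs. 1)"
  proof (rule sum.cong[OF refl])
    fix b assume b: "b \<in> Bs"
    have "(\<Sum>i\<in>UNIV. b $ i * R (axis i 1) b) = vec.representation Bs (\<Sum>i\<in>UNIV. b $ i *s (P *v axis i 1)) b"
      unfolding R_def
      by (simp add: vec.representation_sum[OF Bs(2)] vec.span_scale Pv vec.representation_scale[OF Bs(2) Pv])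
    also have "(\<Sum>i\<in>UNIV. b $ i *s (P *v axis i 1)) = P *v b"
      by (simp add: cvec_eq sum_component mv_axis) (simp add: matrix_vector_mult_def mult.commute)
    also have "P *v b = b" using P_fix b Bs(1) by blast
    finally show "(\<Sum>i\<in>UNIV. b $ i * R (axis i 1) b) = 1"
      using vec.representation_basis[OF Bs(2) b] by simp
  qed
  finally show ?thesis using Bs(4) by simp
qed

end


lemma cspan_empty: "cspan {} = {0}"
  unfolding cspan_def by auto

lemma hs_munit: "hs E (munit k i) = cnj (E $ k $ i)"
proof -
  have "hs E (munit k i) = (\<Sum>a\<in>UNIV. \<Sum>b\<in>UNIV. if b = k \<and> a = i then cnj (E$b$a) else 0)"
    unfolding hs_expand munit_nth by (intro sum.cong) auto
  also have "\<dots> = (\<Sum>a\<in>UNIV. if a = i then cnj (E$k$a) else 0)"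
    by (intro sum.cong) (auto simp: sum.delta')
  finally show ?thesis by simp
qed

lemma swap3: "(\<Sum>l\<in>L. (\<Sum>k\<in>K. a k * b k l) * c l) = (\<Sum>k\<in>K. \<Sum>l\<in>L. b k l * (a k * (c l::complex)))"
proof -
  have "(\<Sum>l\<in>L. (\<Sum>k\<in>K. a k * b k l) * c l) = (\<Sum>l\<in>L. \<Sum>k\<in>K. b k l * (a k * c l))"
    by (simp add: sum_distrib_right sum_distrib_left mult_ac)
  also have "\<dots> = (\<Sum>k\<in>K. \<Sum>l\<in>L. b k l * (a k * c l))" by (rule sum.swap)
  finally show ?thesis .
qed

lemma swapE: "(\<Sum>E\<in>B. \<Sum>k\<in>K. \<Sum>l\<in>L. x k l * f E k l) = (\<Sum>k\<in>K. \<Sum>l\<in>L. x k l * (\<Sum>E\<in>B. (f E k l::complex)))"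
proof -
  have "(\<Sum>k\<in>K. \<Sum>l\<in>L. x k l * (\<Sum>E\<in>B. f E k l)) = (\<Sum>k\<in>K. \<Sum>l\<in>L. \<Sum>E\<in>B. x k l * f E k l)"
    by (simp add: sum_distrib_left)
  also have "\<dots> = (\<Sum>k\<in>K. \<Sum>E\<in>B. \<Sum>l\<in>L. x k l * f E k l)"
    by (rule sum.cong[OF refl], rule sum.swap)
  also have "\<dots> = (\<Sum>E\<in>B. \<Sum>k\<in>K. \<Sum>l\<in>L. x k l * f E k l)"
    by (rule sum.swap)
  finally show ?thesis by simp
qed

lemma Proj_munit_nth: "Proj B' (munit k i) $ l $ j = (\<Sum>E\<in>B'. cnj (E$k$i) * E$l$j)"
  by (simp add: Proj_def sum_component hs_munit)

lemma Twirl_kernel: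
  "Twirl B' X $ i $ j = (\<Sum>k\<in>UNIV. \<Sum>l\<in>UNIV. X$k$l * Proj B' (munit k i) $ l $ j)"
proof -
  have "Twirl B' X $ i $ j = (\<Sum>E\<in>B'. \<Sum>l\<in>UNIV. (\<Sum>k\<in>UNIV. cnj (E$k$i) * X$k$l) * E$l$j)"
    by (simp add: Twirl_def sum_component mm_nth)
  also have "\<dots> = (\<Sum>E\<in>B'. \<Sum>k\<in>UNIV. \<Sum>l\<in>UNIV. X$k$l * (cnj (E$k$i) * E$l$j))"
    by (rule sum.cong[OF refl], rule swap3)
  also have "\<dots> = (\<Sum>k\<in>UNIV. \<Sum>l\<in>UNIV. X$k$l * (\<Sum>E\<in>B'. cnj (E$k$i) * E$l$j))"
    by (rule swapE)
  also have "\<dots> = (\<Sum>k\<in>UNIV. \<Sum>l\<in>UNIV. X$k$l * Proj B' (munit k i) $ l $ j)"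
    by (simp add: Proj_munit_nth)
  finally show ?thesis .
qed


lemma uni1: "unitary_mat U \<Longrightarrow> ((A::complex^'n^'n) ** adjm U) ** U = A"
  unfolding unitary_mat_def by (metis matrix_mul_assoc matrix_mul_rid)
lemma uni2: "unitary_mat U \<Longrightarrow> ((A::complex^'n^'n) ** U) ** adjm U = A"
  unfolding unitary_mat_def by (metis matrix_mul_assoc matrix_mul_rid)
lemma uni3: "unitary_mat U \<Longrightarrow> adjm U ** U = Imat"
  unfolding unitary_mat_def by blast
lemma uni4: "unitary_mat U \<Longrightarrow> U ** adjm U = Imat"
  unfolding unitary_mat_def by blast

lemma hs_cU: assumes U: "unitary_mat U"
  shows "hs (U ** X ** adjm U) (U ** Y ** adjm U) = hs X Y"
proof -
  have "hs (U ** X ** adjm U) (U ** Y ** adjm U) = trace (U ** adjm X ** adjm U ** U ** Y ** adjm U)"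
    by (simp add: hs_trace adjm_mult matrix_mul_assoc)
  also have "\<dots> = trace (U ** (adjm X ** Y ** adjm U))"
    using uni1[OF U, of "U ** adjm X"] by (simp add: matrix_mul_assoc)
  also have "\<dots> = trace (adjm X ** Y ** adjm U ** U)"
    by (subst trace_mul_sym) (simp add: matrix_mul_assoc)
  also have "\<dots> = hs X Y" using uni1[OF U, of "adjm X ** Y"] by (simp add: hs_trace)
  finally show ?thesis .
qed

lemma cU_sum: fixes U V :: "complex^'n^'n" shows "U ** (sum f F) ** V = (\<Sum>x\<in>F. U ** f x ** V)"
  by (simp add: mult_sum_left mult_sum_right)
lemma cU_msc: fixes U V X :: "complex^'n^'n" shows "U ** (msc c X) ** V = msc c (U ** X ** V)"
  by (simp only: msc_mult_right[symmetric] msc_mult_left[symmetric])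

context
  fixes G :: "('g, 'b) monoid_scheme" and \<rho> :: "'g \<Rightarrow> complex^'n^'n"
    and Esp :: "'x::finite \<Rightarrow> (complex^'n^'n) set" and B :: "'x \<Rightarrow> (complex^'n^'n) set"
  assumes rep: "unitary_rep G \<rho>"
    and decomp: "multiplicity_free_decomp G \<rho> Esp"
    and onb: "\<And>\<xi>. orthonormal_basis_of (B \<xi>) (Esp \<xi>)"
begin

lemma dparts:
  "(\<forall>\<xi>. irreducible_subrep G \<rho> (Esp \<xi>)) \<and>
     (\<forall>\<xi> \<eta>. \<xi> \<noteq> \<eta> \<longrightarrow> (\<forall>X\<in>Esp \<xi>. \<forall>Y\<in>Esp \<eta>. hs X Y = 0)) \<and>
     (\<forall>\<xi> \<eta>. \<xi> \<noteq> \<eta> \<longrightarrow> \<not> isomorphic_subreps G \<rho> (Esp \<xi>) (Esp \<eta>)) \<and>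
     (\<forall>X. \<exists>f. (\<forall>\<xi>. f \<xi> \<in> Esp \<xi>) \<and> X = (\<Sum>\<xi>\<in>UNIV. f \<xi>))"
  using decomp unfolding multiplicity_free_decomp_def .

lemma irr: "irreducible_subrep G \<rho> (Esp \<xi>)"
  using dparts by simp
lemma iparts: "csubspace (Esp \<xi>) \<and> Esp \<xi> \<noteq> {0} \<and> invariant G \<rho> (Esp \<xi>) \<and>
     (\<forall>W. csubspace W \<and> W \<subseteq> Esp \<xi> \<and> invariant G \<rho> W \<longrightarrow> W = {0} \<or> W = Esp \<xi>)"
  using irr[of \<xi>] unfolding irreducible_subrep_def .
lemma Esp_csub: "csubspace (Esp \<xi>)" using iparts by simp
lemma Esp_nz: "Esp \<xi> \<noteq> {0}" using iparts by simp
lemma Esp_inv: "invariant G \<rho> (Esp \<xi>)" using iparts by simp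
lemma Esp_min: "csubspace W \<Longrightarrow> W \<subseteq> Esp \<xi> \<Longrightarrow> invariant G \<rho> W \<Longrightarrow> W = {0} \<or> W = Esp \<xi>"
  using iparts[of \<xi>] by simp
lemma Esp_orth: "\<xi> \<noteq> \<eta> \<Longrightarrow> X \<in> Esp \<xi> \<Longrightarrow> Y \<in> Esp \<eta> \<Longrightarrow> hs X Y = 0"
  using dparts by simp
lemma Esp_noniso: "\<xi> \<noteq> \<eta> \<Longrightarrow> \<not> isomorphic_subreps G \<rho> (Esp \<xi>) (Esp \<eta>)"
  using dparts by simp
lemma Esp_dec: "\<exists>f. (\<forall>\<xi>. f \<xi> \<in> Esp \<xi>) \<and> X = (\<Sum>\<xi>\<in>UNIV. f \<xi>)"
  using dparts by simp

lemma Esp_zero: "0 \<in> Esp \<xi>" using Esp_csub unfolding csubspace_def by blast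
lemma Esp_add: "X \<in> Esp \<xi> \<Longrightarrow> Y \<in> Esp \<xi> \<Longrightarrow> X + Y \<in> Esp \<xi>"
  using Esp_csub unfolding csubspace_def by blast
lemma Esp_msc: "X \<in> Esp \<xi> \<Longrightarrow> msc c X \<in> Esp \<xi>"
  using Esp_csub unfolding csubspace_def by blast

lemma B_fin: "finite (B \<xi>)" using onb unfolding orthonormal_basis_of_def by blast
lemma B_sub: "B \<xi> \<subseteq> Esp \<xi>" using onb unfolding orthonormal_basis_of_def by blast
lemma B_on: "orthonormal (B \<xi>)" using onb unfolding orthonormal_basis_of_def orthonormal_def by blast
lemma B_span: "Esp \<xi> \<subseteq> cspan (B \<xi>)" using onb unfolding orthonormal_basis_of_def by blast

lemma ONB_fix: "orthonormal_basis_of B' (Esp \<xi>) \<Longrightarrow> Y \<in> Esp \<xi> \<Longrightarrow> Proj B' Y = Y"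
  by (rule Proj_cspan) (auto simp: orthonormal_basis_of_def orthonormal_def)

lemma ONB_kill: "orthonormal_basis_of B' (Esp \<xi>) \<Longrightarrow> \<eta> \<noteq> \<xi> \<Longrightarrow> Y \<in> Esp \<eta> \<Longrightarrow> Proj B' Y = 0"
proof (rule Proj_orth, intro ballI)
  fix E assume B': "orthonormal_basis_of B' (Esp \<xi>)" and ne: "\<eta> \<noteq> \<xi>" and Y: "Y \<in> Esp \<eta>" and E: "E \<in> B'"
  have "E \<in> Esp \<xi>" using B' E unfolding orthonormal_basis_of_def by blast
  then show "hs E Y = 0" using Esp_orth[of \<xi> \<eta> E Y] ne Y by simp
qed

lemma ONB_comp:
  assumes B': "orthonormal_basis_of B' (Esp \<xi>)" and f: "\<forall>\<eta>. f \<eta> \<in> Esp \<eta>"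
  shows "Proj B' (\<Sum>\<eta>\<in>UNIV. f \<eta>) = f \<xi>"
proof -
  have "Proj B' (\<Sum>\<eta>\<in>UNIV. f \<eta>) = (\<Sum>\<eta>\<in>UNIV. Proj B' (f \<eta>))" by (rule Proj_sum)
  also have "\<dots> = (\<Sum>\<eta>\<in>UNIV. if \<eta> = \<xi> then f \<xi> else 0)"
    by (rule sum.cong[OF refl]) (auto simp: ONB_fix[OF B'] ONB_kill[OF B'] f)
  also have "\<dots> = f \<xi>" by simp
  finally show ?thesis .
qed

lemma Proj_in: "Proj (B \<xi>) X \<in> Esp \<xi>"
  using cspan_sub[OF Esp_csub B_sub] Proj_in_cspan[OF B_fin] by blast

lemma decomp_Proj: "X = (\<Sum>\<xi>\<in>UNIV. Proj (B \<xi>) X)"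
proof -
  obtain f where f: "\<forall>\<xi>. f \<xi> \<in> Esp \<xi>" "X = (\<Sum>\<xi>\<in>UNIV. f \<xi>)" using Esp_dec by blast
  have "Proj (B \<xi>) X = f \<xi>" for \<xi> using ONB_comp[OF onb f(1)] f(2) by simp
  then show ?thesis using f(2) by simp
qed

lemma ONB_indep: assumes B': "orthonormal_basis_of B' (Esp \<xi>)" shows "Proj B' X = Proj (B \<xi>) X"
proof -
  have "Proj B' X = Proj B' (\<Sum>\<eta>\<in>UNIV. Proj (B \<eta>) X)" using decomp_Proj[of X] by simp
  also have "\<dots> = Proj (B \<xi>) X" by (rule ONB_comp[OF B']) (simp add: Proj_in)
  finally show ?thesis .
qed

lemma Proj_Proj: "Proj (B \<xi>) (Proj (B \<eta>) X) = (if \<xi> = \<eta> then Proj (B \<eta>) X else 0)"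
  using ONB_fix[OF onb Proj_in] ONB_kill[OF onb _ Proj_in] by auto

lemma hs_decomp: "hs X Y = (\<Sum>\<xi>\<in>UNIV. hs X (Proj (B \<xi>) Y))"
  using hs_sum2[of X "\<lambda>\<xi>. Proj (B \<xi>) Y" UNIV] decomp_Proj[of Y] by simp

lemma hs_Proj_orth: "\<xi> \<noteq> \<eta> \<Longrightarrow> hs (Proj (B \<xi>) X) (Proj (B \<eta>) Y) = 0"
  by (rule Esp_orth) (auto simp: Proj_in)

lemma hs_Proj_move: "hs X (Proj (B \<xi>) Y) = hs (Proj (B \<xi>) X) (Proj (B \<xi>) Y)"
proof -
  have "hs X (Proj (B \<xi>) Y) = hs (\<Sum>\<eta>\<in>UNIV. Proj (B \<eta>) X) (Proj (B \<xi>) Y)"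
    using decomp_Proj[of X] by simp
  also have "\<dots> = (\<Sum>\<eta>\<in>UNIV. hs (Proj (B \<eta>) X) (Proj (B \<xi>) Y))" by (rule hs_sum1)
  also have "\<dots> = (\<Sum>\<eta>\<in>UNIV. if \<eta> = \<xi> then hs (Proj (B \<xi>) X) (Proj (B \<xi>) Y) else 0)"
    by (rule sum.cong[OF refl]) (auto simp: hs_Proj_orth)
  finally show ?thesis by simp
qed

lemma Twirl_indep: assumes B': "orthonormal_basis_of B' (Esp \<xi>)" shows "Twirl B' X = Twirl (B \<xi>) X"
  by (simp add: cvec_eq Twirl_kernel ONB_indep[OF B'])

lemma decomp_nth: fixes l j :: 'n shows "(\<Sum>\<xi>\<in>UNIV. Proj (B \<xi>) Y $ l $ j) = Y $ l $ j"
proof -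
  have "Y $ l $ j = (\<Sum>\<xi>\<in>UNIV. Proj (B \<xi>) Y) $ l $ j"
    by (rule arg_cong[where f="\<lambda>Z. Z $ l $ j"], rule decomp_Proj)
  then show ?thesis unfolding sum_component by simp
qed

lemma Twirl_total: "(\<Sum>\<xi>\<in>UNIV. Twirl (B \<xi>) X) = msc (trace X) Imat"
proof -
  have "(\<Sum>\<xi>\<in>UNIV. Twirl (B \<xi>) X) $ i $ j = msc (trace X) Imat $ i $ j" for i j :: 'n
  proof -
    have "(\<Sum>\<xi>\<in>UNIV. Twirl (B \<xi>) X) $ i $ j = (\<Sum>\<xi>\<in>UNIV. \<Sum>k\<in>UNIV. \<Sum>l\<in>UNIV. X$k$l * Proj (B \<xi>) (munit k i) $ l $ j)"
      by (simp add: sum_component Twirl_kernel)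
    also have "\<dots> = (\<Sum>k\<in>UNIV. \<Sum>l\<in>UNIV. X$k$l * (\<Sum>\<xi>\<in>UNIV. Proj (B \<xi>) (munit k i) $ l $ j))"
      by (rule swapE)
    also have "\<dots> = (\<Sum>k\<in>UNIV. \<Sum>l\<in>UNIV. X$k$l * munit k i $ l $ j)"
      by (simp only: decomp_nth)
    also have "\<dots> = (\<Sum>k\<in>UNIV. if j = i then X$k$k else 0)"
    proof (rule sum.cong[OF refl])
      fix k
      have "(\<Sum>l\<in>UNIV. X$k$l * munit k i $ l $ j) = (\<Sum>l\<in>UNIV. if l = k then (if j = i then X$k$k else 0) else 0)"
        by (rule sum.cong[OF refl]) (simp add: munit_nth)
      then show "(\<Sum>l\<in>UNIV. X$k$l * munit k i $ l $ j) = (if j = i then X$k$k else 0)" by simp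
    qed
    also have "\<dots> = msc (trace X) Imat $ i $ j"
      by (simp add: Imat_nth trace_def)
    finally show ?thesis .
  qed
  then show ?thesis by (simp add: cvec_eq)
qed

lemma grp: "group G" using rep unfolding unitary_rep_def by blast
lemma rho_uni: "g \<in> carrier G \<Longrightarrow> unitary_mat (\<rho> g)" using rep unfolding unitary_rep_def by blast
lemma rho_mult: "g \<in> carrier G \<Longrightarrow> h \<in> carrier G \<Longrightarrow> \<rho> (g \<otimes>\<^bsub>G\<^esub> h) = \<rho> g ** \<rho> h"
  using rep unfolding unitary_rep_def by blast

lemma rho_one: "\<rho> \<one>\<^bsub>G\<^esub> = Imat"
proof -
  have one: "\<one>\<^bsub>G\<^esub> \<in> carrier G" using grp by (simp add: group.is_monoid monoid.one_closed)
  have "\<one>\<^bsub>G\<^esub> \<otimes>\<^bsub>G\<^esub> \<one>\<^bsub>G\<^esub> = \<one>\<^bsub>G\<^esub>" using grp one by (simp add: group.is_monoid monoid.l_one)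
  then have e: "\<rho> \<one>\<^bsub>G\<^esub> = \<rho> \<one>\<^bsub>G\<^esub> ** \<rho> \<one>\<^bsub>G\<^esub>" using rho_mult[OF one one] by simp
  have "Imat = adjm (\<rho> \<one>\<^bsub>G\<^esub>) ** \<rho> \<one>\<^bsub>G\<^esub>" using uni3[OF rho_uni[OF one]] by simp
  also have "\<dots> = (adjm (\<rho> \<one>\<^bsub>G\<^esub>) ** \<rho> \<one>\<^bsub>G\<^esub>) ** \<rho> \<one>\<^bsub>G\<^esub>"
    by (subst e) (simp add: matrix_mul_assoc) 
  also have "\<dots> = \<rho> \<one>\<^bsub>G\<^esub>" using uni3[OF rho_uni[OF one]] by simp
  finally show ?thesis by simp
qed

lemma rho_inv: assumes g: "g \<in> carrier G" shows "\<rho> (inv\<^bsub>G\<^esub> g) = adjm (\<rho> g)"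
proof -
  have ig: "inv\<^bsub>G\<^esub> g \<in> carrier G" using grp g by (simp add: group.inv_closed)
  have "\<rho> g ** \<rho> (inv\<^bsub>G\<^esub> g) = Imat"
    using rho_mult[OF g ig] group.r_inv[OF grp g] rho_one by simp
  then have "adjm (\<rho> g) ** (\<rho> g ** \<rho> (inv\<^bsub>G\<^esub> g)) = adjm (\<rho> g)" by simp
  then show ?thesis using uni3[OF rho_uni[OF g]] by (simp add: matrix_mul_assoc)
qed

lemma conj_basis:
  assumes g: "g \<in> carrier G"
  shows "orthonormal_basis_of ((\<lambda>E. \<rho> g ** E ** adjm (\<rho> g)) ` B \<xi>) (Esp \<xi>)"
proof -
  let ?U = "\<rho> g"
  let ?c = "\<lambda>E. ?U ** E ** adjm ?U"
  let ?B' = "?c ` B \<xi>"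
  have U: "unitary_mat ?U" using rho_uni[OF g] .
  have inj: "inj_on ?c (B \<xi>)"
  proof (rule inj_onI)
    fix E F assume E: "E \<in> B \<xi>" and F: "F \<in> B \<xi>" and eq: "?c E = ?c F"
    have "hs E F = hs (?c E) (?c F)" using hs_cU[OF U] by simp
    also have "\<dots> = hs (?c E) (?c E)" using eq by simp
    also have "\<dots> = hs E E" using hs_cU[OF U] by simp
    also have "\<dots> = 1" using B_on E unfolding orthonormal_def by simp
    finally have "hs E F = 1" .
    then show "E = F" using B_on E F unfolding orthonormal_def by (auto split: if_splits)
  qed
  have fin: "finite ?B'" using B_fin by simp
  have sub: "?B' \<subseteq> Esp \<xi>"
    using Esp_inv[of \<xi>] B_sub[of \<xi>] g unfolding invariant_def conj_act_def by blast
  have on: "\<forall>X\<in>?B'. \<forall>Y\<in>?B'. hs X Y = (if X = Y then 1 else 0)"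
  proof (intro ballI)
    fix X Y assume "X \<in> ?B'" "Y \<in> ?B'"
    then obtain E F where E: "E \<in> B \<xi>" "X = ?c E" and F: "F \<in> B \<xi>" "Y = ?c F" by blast
    have "hs X Y = hs E F" using E F hs_cU[OF U] by simp
    also have "\<dots> = (if E = F then 1 else 0)" using B_on E F unfolding orthonormal_def by simp
    also have "(E = F) = (X = Y)" using inj E F unfolding inj_on_def by blast
    finally show "hs X Y = (if X = Y then 1 else 0)" .
  qed
  have span: "Esp \<xi> \<subseteq> cspan ?B'"
  proof
    fix Y assume Y: "Y \<in> Esp \<xi>"
    define Y' where "Y' = adjm ?U ** Y ** ?U"
    have ig: "inv\<^bsub>G\<^esub> g \<in> carrier G" using grp g by (simp add: group.inv_closed)
    have "conj_act \<rho> (inv\<^bsub>G\<^esub> g) Y \<in> Esp \<xi>" using Esp_inv[of \<xi>] ig Y unfolding invariant_def by blast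
    then have Y'E: "Y' \<in> Esp \<xi>" unfolding conj_act_def Y'_def rho_inv[OF g] by simp
    have YY: "?c Y' = Y" unfolding Y'_def using uni4[OF U] uni2[OF U, of Y]
      by (simp add: matrix_mul_assoc)
    have "Proj ?B' Y = (\<Sum>E\<in>B \<xi>. msc (hs (?c E) Y) (?c E))"
      unfolding Proj_def by (rule sum.reindex[OF inj, unfolded comp_def])
    also have "\<dots> = (\<Sum>E\<in>B \<xi>. ?c (msc (hs E Y') E))"
      using hs_cU[OF U] YY by (metis (no_types, lifting) cU_msc)
    also have "\<dots> = ?c (Proj (B \<xi>) Y')" unfolding Proj_def cU_sum ..
    also have "\<dots> = Y" using ONB_fix[OF onb Y'E] YY by simp
    finally have "Proj ?B' Y = Y" .
    then show "Y \<in> cspan ?B'" using Proj_in_cspan[OF fin, of Y] by simp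
  qed
  show ?thesis unfolding orthonormal_basis_of_def using fin sub on span by blast
qed

lemma Proj_equiv:
  assumes g: "g \<in> carrier G"
  shows "Proj (B \<eta>) (conj_act \<rho> g X) = conj_act \<rho> g (Proj (B \<eta>) X)"
proof -
  let ?U = "\<rho> g"
  let ?c = "\<lambda>E. ?U ** E ** adjm ?U"
  have U: "unitary_mat ?U" using rho_uni[OF g] .
  have inj: "inj_on ?c (B \<eta>)"
  proof (rule inj_onI)
    fix E F assume "?c E = ?c F"
    then have "adjm ?U ** ?c E ** ?U = adjm ?U ** ?c F ** ?U" by simp
    then show "E = F" using uni3[OF U] uni1[OF U] by (simp add: matrix_mul_assoc)
  qed
  have "Proj (B \<eta>) (?c X) = Proj (?c ` B \<eta>) (?c X)"
    using ONB_indep[OF conj_basis[OF g]] by simp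
  also have "\<dots> = (\<Sum>E\<in>B \<eta>. msc (hs (?c E) (?c X)) (?c E))"
    unfolding Proj_def by (rule sum.reindex[OF inj, unfolded comp_def])
  also have "\<dots> = (\<Sum>E\<in>B \<eta>. ?c (msc (hs E X) E))"
    by (simp add: hs_cU[OF U] cU_msc)
  also have "\<dots> = ?c (Proj (B \<eta>) X)" unfolding Proj_def cU_sum ..
  finally show ?thesis unfolding conj_act_def .
qed

lemma Twirl_equiv:
  assumes g: "g \<in> carrier G"
  shows "Twirl (B \<xi>) (conj_act \<rho> g X) = conj_act \<rho> g (Twirl (B \<xi>) X)"
proof -
  let ?U = "\<rho> g"
  let ?c = "\<lambda>E. ?U ** E ** adjm ?U"
  have U: "unitary_mat ?U" using rho_uni[OF g] .
  have inj: "inj_on ?c (B \<xi>)"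
  proof (rule inj_onI)
    fix E F assume "?c E = ?c F"
    then have "adjm ?U ** ?c E ** ?U = adjm ?U ** ?c F ** ?U" by simp
    then show "E = F" using uni3[OF U] uni1[OF U] by (simp add: matrix_mul_assoc)
  qed
  have key: "adjm (?c E) ** ?c X ** ?c E = ?c (adjm E ** X ** E)" for E
  proof -
    have "adjm (?c E) ** ?c X ** ?c E = ?U ** adjm E ** adjm ?U ** ?U ** X ** adjm ?U ** ?U ** E ** adjm ?U"
      by (simp add: adjm_mult matrix_mul_assoc)
    also have "\<dots> = ?U ** adjm E ** X ** E ** adjm ?U"
      using uni1[OF U, of "?U ** adjm E"] uni1[OF U, of "?U ** adjm E ** X"] by simp
    finally show ?thesis by (simp add: matrix_mul_assoc)
  qed
  have "Twirl (B \<xi>) (?c X) = Twirl (?c ` B \<xi>) (?c X)"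
    using Twirl_indep[OF conj_basis[OF g]] by simp
  also have "\<dots> = (\<Sum>E\<in>B \<xi>. adjm (?c E) ** ?c X ** ?c E)"
    unfolding Twirl_def by (rule sum.reindex[OF inj, unfolded comp_def])
  also have "\<dots> = (\<Sum>E\<in>B \<xi>. ?c (adjm E ** X ** E))" using key by simp
  also have "\<dots> = ?c (Twirl (B \<xi>) X)" unfolding Twirl_def cU_sum ..
  finally show ?thesis unfolding conj_act_def .
qed

lemma conj_add: "conj_act \<rho> g (X + Y) = conj_act \<rho> g X + conj_act \<rho> g Y"
  unfolding conj_act_def by (simp add: matrix_add_ldistrib matrix_add_rdistrib)
lemma conj_msc: "conj_act \<rho> g (msc c X) = msc c (conj_act \<rho> g X)"
  unfolding conj_act_def by (rule cU_msc)
lemma conj_zero: "conj_act \<rho> g 0 = 0"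
  unfolding conj_act_def by simp

lemma Esp_conj: "g \<in> carrier G \<Longrightarrow> Y \<in> Esp \<sigma> \<Longrightarrow> conj_act \<rho> g Y \<in> Esp \<sigma>"
  using Esp_inv[of \<sigma>] unfolding invariant_def by blast

lemma Esp_ex_nz: "\<exists>Y\<in>Esp \<sigma>. Y \<noteq> 0"
  using Esp_nz[of \<sigma>] Esp_zero[of \<sigma>] by blast

lemma lin_zero: "(\<And>c X. T (msc c X) = msc c (T X)) \<Longrightarrow> T 0 = 0"
  by (metis msc_0(1))

lemma lin_sum: assumes "\<And>X Y. T (X + Y) = T X + T Y" "\<And>c X. T (msc c X) = msc c (T X)"
  shows "T (sum f F) = (\<Sum>x\<in>F. T (f x))"
proof (induct F rule: infinite_finite_induct)
  case (infinite A) then show ?case using lin_zero[OF assms(2)] by simp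
next
  case empty then show ?case using lin_zero[OF assms(2)] by simp
next
  case (insert x F) then show ?case using assms(1) by simp
qed

context
  fixes T :: "complex^'n^'n \<Rightarrow> complex^'n^'n"
  assumes Tadd: "\<And>X Y. T (X + Y) = T X + T Y"
    and Tmsc: "\<And>c X. T (msc c X) = msc c (T X)"
    and Teq: "\<And>g X. g \<in> carrier G \<Longrightarrow> T (conj_act \<rho> g X) = conj_act \<rho> g (T X)"
begin

lemma Ladd: "Proj (B \<eta>) (T (X + Y)) = Proj (B \<eta>) (T X) + Proj (B \<eta>) (T Y)"
  by (simp add: Tadd Proj_add)
lemma Lmsc: "Proj (B \<eta>) (T (msc c X)) = msc c (Proj (B \<eta>) (T X))"
  by (simp add: Tmsc Proj_msc)
lemma Leq: "g \<in> carrier G \<Longrightarrow> Proj (B \<eta>) (T (conj_act \<rho> g X)) = conj_act \<rho> g (Proj (B \<eta>) (T X))"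
  by (simp add: Teq Proj_equiv)
lemma L0: "Proj (B \<eta>) (T 0) = 0"
  using lin_zero[OF Tmsc] by simp

lemma schur_off:
  assumes ne: "\<sigma> \<noteq> \<eta>" and Y: "Y \<in> Esp \<sigma>"
  shows "Proj (B \<eta>) (T Y) = 0"
proof -
  define L where "L Y = Proj (B \<eta>) (T Y)" for Y
  have La: "L (X + Y) = L X + L Y" for X Y unfolding L_def by (rule Ladd)
  have Lm: "L (msc c X) = msc c (L X)" for c X unfolding L_def by (rule Lmsc)
  have Le: "g \<in> carrier G \<Longrightarrow> L (conj_act \<rho> g X) = conj_act \<rho> g (L X)" for g X unfolding L_def by (rule Leq)
  have Lz: "L 0 = 0" unfolding L_def by (rule L0)
  have Lin: "L X \<in> Esp \<eta>" for X unfolding L_def by (rule Proj_in)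
  define W where "W = {Y \<in> Esp \<sigma>. L Y = 0}"
  have Wc: "csubspace W" unfolding csubspace_def W_def
    using Esp_zero Esp_add Esp_msc Lz La Lm by auto
  have Wi: "invariant G \<rho> W" unfolding invariant_def W_def
    using Esp_conj Le conj_zero by auto
  have "W = {0} \<or> W = Esp \<sigma>" by (rule Esp_min[OF Wc _ Wi]) (auto simp: W_def)
  moreover have "W \<noteq> {0}"
  proof
    assume W0: "W = {0}"
    have inj: "inj_on L (Esp \<sigma>)"
    proof (rule inj_onI)
      fix Y1 Y2 assume Y1: "Y1 \<in> Esp \<sigma>" and Y2: "Y2 \<in> Esp \<sigma>" and eq: "L Y1 = L Y2"
      have d: "Y1 + msc (-1) Y2 \<in> Esp \<sigma>" using Y1 Y2 Esp_add Esp_msc by blast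
      have "L (Y1 + msc (-1) Y2) = L Y1 + msc (-1) (L Y2)" by (simp only: La Lm)
      then have "L (Y1 + msc (-1) Y2) = 0" using eq by (simp add: msc_uminus)
      then have "Y1 + msc (-1) Y2 \<in> W" using d W_def by blast
      then have "Y1 + msc (-1) Y2 = 0" using W0 by blast
      then show "Y1 = Y2" by (simp add: msc_uminus)
    qed
    define R where "R = L ` Esp \<sigma>"
    have Rc: "csubspace R" unfolding csubspace_def R_def
    proof (intro conjI ballI allI)
      show "0 \<in> L ` Esp \<sigma>" using Lz Esp_zero by (metis image_eqI)
    next
      fix X Y assume "X \<in> L ` Esp \<sigma>" "Y \<in> L ` Esp \<sigma>"
      then obtain X' Y' where "X' \<in> Esp \<sigma>" "Y' \<in> Esp \<sigma>" "X = L X'" "Y = L Y'" by blast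
      then show "X + Y \<in> L ` Esp \<sigma>" using La Esp_add by (metis image_eqI)
    next
      fix c X assume "X \<in> L ` Esp \<sigma>"
      then obtain X' where "X' \<in> Esp \<sigma>" "X = L X'" by blast
      then show "msc c X \<in> L ` Esp \<sigma>" using Lm Esp_msc by (metis image_eqI)
    qed
    have Ri: "invariant G \<rho> R" unfolding invariant_def R_def
    proof (intro ballI)
      fix g X assume g: "g \<in> carrier G" and "X \<in> L ` Esp \<sigma>"
      then obtain X' where "X' \<in> Esp \<sigma>" "X = L X'" by blast
      then show "conj_act \<rho> g X \<in> L ` Esp \<sigma>" using Le[OF g] Esp_conj[OF g] by (metis image_eqI)
    qed
    have Rs: "R \<subseteq> Esp \<eta>" unfolding R_def using Lin by blast
    have Rnz: "R \<noteq> {0}"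
    proof
      assume R0: "R = {0}"
      obtain Y where Y: "Y \<in> Esp \<sigma>" "Y \<noteq> 0" using Esp_ex_nz by blast
      then have "L Y = 0" using R0 unfolding R_def by blast
      then have "Y \<in> W" using Y W_def by blast
      then show False using W0 Y by blast
    qed
    have "R = Esp \<eta>" using Esp_min[OF Rc Rs Ri] Rnz by blast
    then have "bij_betw L (Esp \<sigma>) (Esp \<eta>)" using inj unfolding bij_betw_def R_def by blast
    then have "isomorphic_subreps G \<rho> (Esp \<sigma>) (Esp \<eta>)"
      unfolding isomorphic_subreps_def using La Lm Le by blast
    then show False using Esp_noniso[OF ne] by blast
  qed
  ultimately have "W = Esp \<sigma>" by blast
  then show ?thesis using Y unfolding W_def L_def by blast
qed

lemma schur_diag: "\<exists>lam. \<forall>Y\<in>Esp \<sigma>. Proj (B \<sigma>) (T Y) = msc lam Y"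
proof -
  define L where "L Y = Proj (B \<sigma>) (T Y)" for Y
  have La: "L (X + Y) = L X + L Y" for X Y unfolding L_def by (rule Ladd)
  have Lm: "L (msc c X) = msc c (L X)" for c X unfolding L_def by (rule Lmsc)
  have Le: "g \<in> carrier G \<Longrightarrow> L (conj_act \<rho> g X) = conj_act \<rho> g (L X)" for g X unfolding L_def by (rule Leq)
  have Lz: "L 0 = 0" unfolding L_def by (rule L0)
  have Lin: "L X \<in> Esp \<sigma>" for X unfolding L_def by (rule Proj_in)
  have Ls: "L (sum f F) = (\<Sum>x\<in>F. L (f x))" for f and F :: "'z set" by (rule lin_sum[OF La Lm])
  obtain bs where bs: "set bs = B \<sigma>" "distinct bs" using finite_distinct_list[OF B_fin] by blast
  define d where "d = length bs"
  have bsE: "j < d \<Longrightarrow> bs ! j \<in> Esp \<sigma>" for j using B_sub bs(1) nth_mem unfolding d_def by blast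
  have hsbs: "i < d \<Longrightarrow> j < d \<Longrightarrow> hs (bs ! i) (bs ! j) = (if i = j then 1 else 0)" for i j
    using B_on[of \<sigma>] bs nth_mem nth_eq_iff_index_eq unfolding orthonormal_def d_def by (metis)
  have dpos: "0 < d"
  proof (rule ccontr)
    assume "\<not> 0 < d"
    then have "B \<sigma> = {}" using bs unfolding d_def by simp
    then have "Esp \<sigma> \<subseteq> {0}" using B_span[of \<sigma>] cspan_empty by metis
    then show False using Esp_nz[of \<sigma>] Esp_zero[of \<sigma>] by blast
  qed
  define M where "M i j = hs (bs ! i) (L (bs ! j))" for i j
  obtain lam v where lv: "\<exists>i<d. v i \<noteq> 0" "\<forall>i<d. (\<Sum>j<d. M i j * v j) = lam * v i"
    using eig_exists[OF dpos, of M] by blast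
  define Y0 where "Y0 = (\<Sum>j<d. msc (v j) (bs ! j))"
  have hsY0: "hs (bs ! i) Y0 = v i" if i: "i < d" for i
  proof -
    have "hs (bs ! i) Y0 = (\<Sum>j<d. v j * hs (bs ! i) (bs ! j))" by (simp add: Y0_def hs_sum2 hs_msc2)
    also have "\<dots> = (\<Sum>j<d. if j = i then v i else 0)"
      by (rule sum.cong[OF refl]) (simp add: hsbs i)
    finally show ?thesis using i by simp
  qed
  have Y0E: "Y0 \<in> Esp \<sigma>" unfolding Y0_def by (rule csub_sum[OF Esp_csub]) (auto intro: Esp_msc bsE)
  have Y0nz: "Y0 \<noteq> 0" using lv(1) hsY0 by force
  have LY0: "L Y0 = (\<Sum>j<d. msc (v j) (L (bs ! j)))" unfolding Y0_def Ls Lm ..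
  have hsL: "hs (bs ! i) (L Y0) = lam * v i" if i: "i < d" for i
  proof -
    have "hs (bs ! i) (L Y0) = (\<Sum>j<d. M i j * v j)" by (simp add: LY0 hs_sum2 hs_msc2 M_def mult.commute)
    then show ?thesis using lv(2) i by simp
  qed
  have "L Y0 = Proj (B \<sigma>) (L Y0)" using ONB_fix[OF onb Lin] by simp
  also have "\<dots> = (\<Sum>i<d. msc (hs (bs ! i) (L Y0)) (bs ! i))"
    unfolding Proj_def
    by (rule sum.reindex_bij_betw[symmetric], rule bij_betw_nth) (auto simp: bs d_def)
  also have "\<dots> = (\<Sum>i<d. msc lam (msc (v i) (bs ! i)))"
    by (rule sum.cong[OF refl]) (simp add: hsL msc_msc)
  also have "\<dots> = msc lam Y0" unfolding Y0_def msc_sum ..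
  finally have eig: "L Y0 = msc lam Y0" .
  define W where "W = {Y \<in> Esp \<sigma>. L Y = msc lam Y}"
  have Wc: "csubspace W" unfolding csubspace_def W_def
  proof (intro conjI ballI allI)
    show "0 \<in> {Y \<in> Esp \<sigma>. L Y = msc lam Y}" using Esp_zero Lz by simp
  next
    fix X Y assume "X \<in> {Y \<in> Esp \<sigma>. L Y = msc lam Y}" "Y \<in> {Y \<in> Esp \<sigma>. L Y = msc lam Y}"
    then show "X + Y \<in> {Y \<in> Esp \<sigma>. L Y = msc lam Y}" using Esp_add La by (simp add: msc_add)
  next
    fix c X assume "X \<in> {Y \<in> Esp \<sigma>. L Y = msc lam Y}"
    then show "msc c X \<in> {Y \<in> Esp \<sigma>. L Y = msc lam Y}" using Esp_msc Lm by (simp add: msc_msc mult.commute)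
  qed
  have Wi: "invariant G \<rho> W" unfolding invariant_def W_def
    using Esp_conj Le conj_msc by auto
  have "W = {0} \<or> W = Esp \<sigma>" by (rule Esp_min[OF Wc _ Wi]) (auto simp: W_def)
  moreover have "Y0 \<in> W" using Y0E eig W_def by blast
  ultimately have "W = Esp \<sigma>" using Y0nz by blast
  then show ?thesis unfolding W_def L_def by blast
qed

lemma T_scalar: "\<exists>lam. \<forall>X. T X = (\<Sum>\<sigma>\<in>UNIV. msc (lam \<sigma>) (Proj (B \<sigma>) X))"
proof -
  have "\<forall>\<sigma>. \<exists>l. \<forall>Y\<in>Esp \<sigma>. Proj (B \<sigma>) (T Y) = msc l Y" using schur_diag by blast
  then obtain lam where lam: "\<forall>\<sigma>. \<forall>Y\<in>Esp \<sigma>. Proj (B \<sigma>) (T Y) = msc (lam \<sigma>) Y"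
    using choice[of "\<lambda>\<sigma> l. \<forall>Y\<in>Esp \<sigma>. Proj (B \<sigma>) (T Y) = msc l Y"] by blast
  have TY: "T Y = msc (lam \<sigma>) Y" if Y: "Y \<in> Esp \<sigma>" for Y \<sigma>
  proof -
    have "T Y = (\<Sum>\<eta>\<in>UNIV. Proj (B \<eta>) (T Y))" by (rule decomp_Proj)
    also have "\<dots> = (\<Sum>\<eta>\<in>UNIV. if \<eta> = \<sigma> then msc (lam \<sigma>) Y else 0)"
      by (rule sum.cong[OF refl]) (metis lam Y schur_off)
    finally show ?thesis by simp
  qed
  have "T X = (\<Sum>\<sigma>\<in>UNIV. msc (lam \<sigma>) (Proj (B \<sigma>) X))" for X
  proof -
    have "T X = T (\<Sum>\<sigma>\<in>UNIV. Proj (B \<sigma>) X)" using decomp_Proj[of X] by simp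
    also have "\<dots> = (\<Sum>\<sigma>\<in>UNIV. T (Proj (B \<sigma>) X))" by (rule lin_sum[OF Tadd Tmsc])
    also have "\<dots> = (\<Sum>\<sigma>\<in>UNIV. msc (lam \<sigma>) (Proj (B \<sigma>) X))"
      by (rule sum.cong[OF refl]) (rule TY[OF Proj_in])
    finally show ?thesis .
  qed
  then show ?thesis by blast
qed

end

lemma Twirl_add: "Twirl B' (X + Y) = Twirl B' X + Twirl B' Y"
  unfolding Twirl_def by (simp add: matrix_add_ldistrib matrix_add_rdistrib sum.distrib)
lemma Twirl_msc: "Twirl B' (msc c X) = msc c (Twirl B' X)"
  unfolding Twirl_def by (simp add: cU_msc msc_sum)

lemma Twirl_scalar: "\<exists>lam. \<forall>X. Twirl (B \<xi>) X = (\<Sum>\<sigma>\<in>UNIV. msc (lam \<sigma>) (Proj (B \<sigma>) X))"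
  by (rule T_scalar[OF Twirl_add Twirl_msc Twirl_equiv])

lemma B_ne: "B \<sigma> \<noteq> {}"
proof
  assume "B \<sigma> = {}"
  then have "Esp \<sigma> \<subseteq> {0}" using B_span[of \<sigma>] cspan_empty by metis
  then show False using Esp_nz[of \<sigma>] Esp_zero[of \<sigma>] by blast
qed

lemma hsn_B: "E \<in> B \<sigma> \<Longrightarrow> hsn E = 1"
proof -
  assume E: "E \<in> B \<sigma>"
  have "complex_of_real (hsn E) = 1" using B_on[of \<sigma>] E hs_self[of E] unfolding orthonormal_def by simp
  then show ?thesis by (metis of_real_eq_1_iff)
qed

lemma sop_Proj_self: "(\<Sum>i\<in>UNIV. \<Sum>j\<in>UNIV. hs (Proj (B \<sigma>) (munit i j)) (Proj (B \<sigma>) (munit i j))) = of_nat (card (B \<sigma>))"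
proof -
  have "(\<Sum>i\<in>UNIV. \<Sum>j\<in>UNIV. hs (Proj (B \<sigma>) (munit i j)) (Proj (B \<sigma>) (munit i j)))
      = (\<Sum>i\<in>UNIV. \<Sum>j\<in>UNIV. complex_of_real (\<Sum>E\<in>B \<sigma>. (cmod (E $ i $ j))^2))"
    by (simp add: hs_Proj_move[symmetric] hs_Proj_self hs_munit)
  also have "\<dots> = complex_of_real (\<Sum>E\<in>B \<sigma>. \<Sum>i\<in>UNIV. \<Sum>j\<in>UNIV. (cmod (E $ i $ j))^2)"
  proof -
    have "(\<Sum>i\<in>UNIV. \<Sum>j\<in>UNIV. \<Sum>E\<in>B \<sigma>. (cmod (E $ i $ j))^2) = (\<Sum>E\<in>B \<sigma>. \<Sum>i\<in>UNIV. \<Sum>j\<in>UNIV. (cmod (E $ i $ j))^2)"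
      by (subst sum.swap) (rule sum.cong[OF refl], rule sum.swap)
    then show ?thesis by (simp only: of_real_sum[symmetric])
  qed
  also have "\<dots> = complex_of_real (\<Sum>E\<in>B \<sigma>. hsn E)"
    unfolding hsn_def by (subst (2) sum.swap) (rule refl)
  also have "\<dots> = complex_of_real (\<Sum>E\<in>B \<sigma>. 1)" using hsn_B by simp
  finally show ?thesis by simp
qed

lemma MacW_lam:
  assumes lam: "\<forall>X. Twirl (B \<xi>) X = (\<Sum>\<sigma>\<in>UNIV. msc (lam \<sigma>) (Proj (B \<sigma>) X))"
  shows "MacW B \<xi> \<sigma> = lam \<sigma>"
proof -
  have "hs (Proj (B \<sigma>) Y) (Twirl (B \<xi>) Y) = lam \<sigma> * hs (Proj (B \<sigma>) Y) (Proj (B \<sigma>) Y)" for Y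
  proof -
    have "hs (Proj (B \<sigma>) Y) (Twirl (B \<xi>) Y) = (\<Sum>\<eta>\<in>UNIV. lam \<eta> * hs (Proj (B \<sigma>) Y) (Proj (B \<eta>) Y))"
      by (simp add: lam hs_sum2 hs_msc2)
    also have "\<dots> = (\<Sum>\<eta>\<in>UNIV. if \<eta> = \<sigma> then lam \<sigma> * hs (Proj (B \<sigma>) Y) (Proj (B \<sigma>) Y) else 0)"
      by (rule sum.cong[OF refl]) (auto simp: hs_Proj_orth)
    finally show ?thesis by simp
  qed
  then have "sop_inner (Proj (B \<sigma>)) (Twirl (B \<xi>)) = lam \<sigma> * of_nat (card (B \<sigma>))"
    unfolding sop_inner_def by (simp add: sum_distrib_left[symmetric] sop_Proj_self)
  moreover have "card (B \<sigma>) \<noteq> 0" using B_ne B_fin by simp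
  ultimately show ?thesis unfolding MacW_def by simp
qed

end

lemma hs_PTw:
  fixes P E :: "complex^'n^'n"
  assumes PA: "adjm P = P" and PP: "P ** P = P"
  shows "hs P (adjm E ** P ** E) = hs (P ** E ** P) (P ** E ** P)"
proof -
  have 1: "adjm (P ** E ** P) ** (P ** E ** P) = (P ** adjm E) ** (P ** P) ** E ** P"
    by (simp add: adjm_mult PA matrix_mul_assoc)
  have "hs (P ** E ** P) (P ** E ** P) = trace ((P ** adjm E ** P ** E) ** P)"
    unfolding hs_trace 1 PP by (simp add: matrix_mul_assoc)
  also have "\<dots> = trace (P ** (P ** adjm E ** P ** E))" by (rule trace_mul_sym)
  also have "\<dots> = trace ((P ** P) ** adjm E ** P ** E)" by (simp add: matrix_mul_assoc)
  also have "\<dots> = hs P (adjm E ** P ** E)" unfolding PP hs_trace PA by (simp add: matrix_mul_assoc)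
  finally show ?thesis by simp
qed

lemma hs_EP:
  fixes P E :: "complex^'n^'n"
  assumes PA: "adjm P = P" and PP: "P ** P = P"
  shows "hs E P = hs (P ** E ** P) P"
proof -
  have 1: "adjm (P ** E ** P) ** P = (P ** adjm E) ** (P ** P)"
    by (simp add: adjm_mult PA matrix_mul_assoc)
  have "hs (P ** E ** P) P = trace ((P ** adjm E) ** P)" unfolding hs_trace 1 PP ..
  also have "\<dots> = trace (P ** (P ** adjm E))" by (rule trace_mul_sym)
  also have "\<dots> = trace (P ** adjm E)" by (simp add: matrix_mul_assoc PP)
  also have "\<dots> = trace (adjm E ** P)" by (rule trace_mul_sym)
  finally show ?thesis unfolding hs_trace by simp
qed

theorem mainTheorem7:
  fixes G :: "('g, 'b) monoid_scheme"
    and \<rho> :: "'g \<Rightarrow> complex^'n^'n"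
    and Esp :: "'x::finite \<Rightarrow> (complex^'n^'n) set"
    and B :: "'x \<Rightarrow> (complex^'n^'n) set"
    and C :: "(complex^'n) set"
    and P :: "complex^'n^'n"
    and K :: nat
    and S :: "'x set"
  assumes rep: "unitary_rep G \<rho>"
    and decomp: "multiplicity_free_decomp G \<rho> Esp"
    and onb: "\<And>\<xi>. orthonormal_basis_of (B \<xi>) (Esp \<xi>)"
    and C_sub: "vec.subspace C"
    and C_dim: "vec.dim C = K"
    and P_proj: "orth_projector C P"
    and det: "\<And>\<xi>. \<xi> \<in> S \<Longrightarrow> detects P (Esp \<xi>)"
  shows "\<exists>A Bw :: 'x \<Rightarrow> real.
           (\<forall>\<xi>. complex_of_real (A \<xi>) = hs P (Proj (B \<xi>) P)) \<and>
           (\<forall>\<xi>. complex_of_real (Bw \<xi>) = hs P (Twirl (B \<xi>) P)) \<and>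
           (\<forall>\<xi>. A \<xi> \<ge> 0) \<and>
           (\<forall>\<xi>. A \<xi> \<le> real K * Bw \<xi>) \<and>
           (\<Sum>\<xi>\<in>UNIV. A \<xi>) = real K \<and>
           (\<Sum>\<xi>\<in>UNIV. Bw \<xi>) = real K ^ 2 \<and>
           (\<forall>\<xi>. complex_of_real (Bw \<xi>) = (\<Sum>\<rho>'\<in>UNIV. MacW B \<xi> \<rho>' * complex_of_real (A \<rho>'))) \<and>
           (\<forall>\<xi>\<in>S. A \<xi> = real K * Bw \<xi>)"
proof -
  have PA: "adjm P = P" by (rule P_adj[OF C_sub P_proj])
  have PP: "P ** P = P" by (rule P_idem[OF C_sub P_proj])
  have trP: "trace P = of_nat K" using P_trace[OF C_sub P_proj] C_dim by simp
  have hsPP: "hs P P = of_nat K" unfolding hs_trace PA PP trP ..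
  have hsnP: "hsn P = real K"
  proof -
    have "complex_of_real (hsn P) = complex_of_real (real K)" using hsPP hs_self[of P] by simp
    then show ?thesis by (simp only: of_real_eq_iff)
  qed
  define A where "A \<xi> = (\<Sum>E\<in>B \<xi>. (cmod (hs E P))^2)" for \<xi>
  define Bw where "Bw \<xi> = (\<Sum>E\<in>B \<xi>. hsn (P ** E ** P))" for \<xi>
  have A1: "complex_of_real (A \<xi>) = hs P (Proj (B \<xi>) P)" for \<xi>
    unfolding A_def hs_Proj_self ..
  have B1: "complex_of_real (Bw \<xi>) = hs P (Twirl (B \<xi>) P)" for \<xi>
    unfolding Bw_def Twirl_def hs_sum2 hs_PTw[OF PA PP] hs_self by simp
  have A0: "A \<xi> \<ge> 0" for \<xi> unfolding A_def by (simp add: sum_nonneg)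
  have AB: "A \<xi> \<le> real K * Bw \<xi>" for \<xi>
  proof -
    have "(cmod (hs E P))^2 \<le> real K * hsn (P ** E ** P)" for E
      using hs_CS[of "P ** E ** P" P] hsnP hs_EP[OF PA PP, of E] by (simp add: mult.commute)
    then show ?thesis unfolding A_def Bw_def sum_distrib_left by (rule sum_mono)
  qed
  have Asum: "(\<Sum>\<xi>\<in>UNIV. A \<xi>) = real K"
  proof -
    have "complex_of_real (\<Sum>\<xi>\<in>UNIV. A \<xi>) = (\<Sum>\<xi>\<in>UNIV. hs P (Proj (B \<xi>) P))"
      using A1 by simp
    also have "\<dots> = hs P P" by (rule hs_decomp[OF rep decomp onb, symmetric])
    finally have "complex_of_real (\<Sum>\<xi>\<in>UNIV. A \<xi>) = complex_of_real (real K)" using hsPP by simp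
    then show ?thesis by (simp only: of_real_eq_iff)
  qed
  have Bsum: "(\<Sum>\<xi>\<in>UNIV. Bw \<xi>) = real K ^ 2"
  proof -
    have "complex_of_real (\<Sum>\<xi>\<in>UNIV. Bw \<xi>) = (\<Sum>\<xi>\<in>UNIV. hs P (Twirl (B \<xi>) P))"
      using B1 by simp
    also have "\<dots> = hs P (\<Sum>\<xi>\<in>UNIV. Twirl (B \<xi>) P)" by (rule hs_sum2[symmetric])
    also have "\<dots> = trace P * hs P Imat" unfolding Twirl_total[OF rep decomp onb] hs_msc2 ..
    also have "hs P Imat = trace P" unfolding hs_trace PA by simp
    finally have "complex_of_real (\<Sum>\<xi>\<in>UNIV. Bw \<xi>) = complex_of_real (real K ^ 2)"
      using trP by (simp add: power2_eq_square)
    then show ?thesis by (simp only: of_real_eq_iff)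
  qed
  have Mac: "complex_of_real (Bw \<xi>) = (\<Sum>\<rho>'\<in>UNIV. MacW B \<xi> \<rho>' * complex_of_real (A \<rho>'))" for \<xi>
  proof -
    obtain lam where lam: "\<forall>X. Twirl (B \<xi>) X = (\<Sum>\<sigma>\<in>UNIV. msc (lam \<sigma>) (Proj (B \<sigma>) X))"
      using Twirl_scalar[OF rep decomp onb] by blast
    have "complex_of_real (Bw \<xi>) = (\<Sum>\<sigma>\<in>UNIV. lam \<sigma> * hs P (Proj (B \<sigma>) P))"
      unfolding B1 using lam by (simp add: hs_sum2 hs_msc2)
    also have "\<dots> = (\<Sum>\<rho>'\<in>UNIV. MacW B \<xi> \<rho>' * complex_of_real (A \<rho>'))"
      using MacW_lam[OF rep decomp onb lam] A1 by simp
    finally show ?thesis .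
  qed
  have SS: "A \<xi> = real K * Bw \<xi>" if xi: "\<xi> \<in> S" for \<xi>
  proof -
    have "(cmod (hs E P))^2 = real K * hsn (P ** E ** P)" if E: "E \<in> B \<xi>" for E
    proof -
      have "E \<in> Esp \<xi>" using E onb[of \<xi>] unfolding orthonormal_basis_of_def by blast
      then obtain c where c: "P ** E ** P = msc c P" using det[OF xi] unfolding detects_def by blast
      have "complex_of_real (hsn (P ** E ** P)) = cnj c * c * of_nat K"
        unfolding hs_self[symmetric] c hs_msc1 hs_msc2 hsPP by simp
      also have "\<dots> = complex_of_real ((cmod c)^2 * real K)"
        using cnj_mult_self[of c] by (simp add: mult.commute)
      finally have h1: "hsn (P ** E ** P) = (cmod c)^2 * real K" by (simp only: of_real_eq_iff)
      have "hs E P = cnj c * of_nat K" unfolding hs_EP[OF PA PP, of E] c hs_msc1 hsPP ..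
      then have "cmod (hs E P) = cmod c * real K" by (simp add: norm_mult)
      then show ?thesis using h1 by (simp add: power2_eq_square)
    qed
    then show ?thesis unfolding A_def Bw_def sum_distrib_left by (rule sum.cong[OF refl])
  qed
  show ?thesis
    apply (rule exI[of _ A], rule exI[of _ Bw])
    using A1 B1 A0 AB Asum Bsum Mac SS by blast
qed

end
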